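(* Let $n\in\mathbb{N}$ and let $f,g\in H$ have as multiplier the same $n$-th root of unity, i.e. $f'(0)=g'(0)=\lambda$ with $\lambda^n=1$, and suppose $f^n\neq\mathrm{id}$. Then every $h\in G$ with $h^{-1}\circ f^n\circ h=g^n$ also satisfies $h^{-1}\circ f\circ h=g$.
   Context: $G$ denotes the group (under composition) of biholomorphic germs at $0$ in one complex variable: germs of functions holomorphic near $0$ with $f(0)=0$ and $f'(0)\neq 0$; $\mathrm{id}$ is the germ of the identity; powers $f^n$ are compositional iterates. $H=\{f\in G: f'(0)=\exp(i\pi q)\text{ for some } q\in\mathbb{Q}\}$. *)

theory Defs
  imports "HOL-Analysis.Analysis"
begin

text \<open>Germs at 0 are represented by functions complex \<Rightarrow> complex; two functions
  define the same germ iff they agree on a neighbourhood of 0.\<close>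

definition germ_eq :: "(complex \<Rightarrow> complex) \<Rightarrow> (complex \<Rightarrow> complex) \<Rightarrow> bool" where
  "germ_eq f g \<longleftrightarrow> (\<forall>\<^sub>F z in nhds 0. f z = g z)"

definition in_G :: "(complex \<Rightarrow> complex) \<Rightarrow> bool" where
  "in_G f \<longleftrightarrow> (\<exists>r>0. f holomorphic_on ball 0 r) \<and> f 0 = 0 \<and> deriv f 0 \<noteq> 0"

definition in_H :: "(complex \<Rightarrow> complex) \<Rightarrow> bool" where
  "in_H f \<longleftrightarrow> in_G f \<and> (\<exists>q \<in> \<rat>. deriv f 0 = exp (\<i> * of_real pi * of_real q))"

definition germ_inv :: "(complex \<Rightarrow> complex) \<Rightarrow> (complex \<Rightarrow> complex) \<Rightarrow> bool" where
  "germ_inv h k \<longleftrightarrow> in_G k \<and> germ_eq (k \<circ> h) id \<and> germ_eq (h \<circ> k) id"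

end

theory Submission
  imports Defs "HOL-Complex_Analysis.Complex_Analysis"
begin

lemma ev_comp:
  assumes "eventually P (nhds 0)" "u analytic_on {0}" "u 0 = (0::complex)"
  shows "eventually (\<lambda>z. P (u z)) (nhds 0)"
proof -
  have "isCont u 0" using assms(2) by (rule analytic_at_imp_isCont)
  hence "u \<midarrow>0\<rightarrow> u 0" by (simp add: isCont_def)
  hence "(u \<longlongrightarrow> u 0) (nhds 0)" by (rule tendsto_at_iff_tendsto_nhds[THEN iffD1])
  hence "filterlim u (nhds 0) (nhds 0)" using assms(3) by simp
  thus ?thesis by (rule eventually_compose_filterlim[OF assms(1)])
qed

lemma tendsto0_at:
  assumes "u analytic_on {0}" "u 0 = (0::complex)"
  shows "(u \<longlongrightarrow> 0) (at 0)"
proof -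
  have "isCont u 0" using assms(1) by (rule analytic_at_imp_isCont)
  thus ?thesis using assms(2) unfolding isCont_def by simp
qed

lemma quot_lim:
  assumes "u analytic_on {0}" "u 0 = (0::complex)"
  shows "((\<lambda>z. u z / z) \<longlongrightarrow> deriv u 0) (at 0)"
proof -
  have "u field_differentiable at 0" using assms(1) by (rule analytic_on_imp_differentiable_at) simp
  hence "(u has_field_derivative deriv u 0) (at 0)" by (rule DERIV_deriv_iff_field_differentiable[THEN iffD2])
  hence "((\<lambda>y. (u y - u 0) / (y - 0)) \<longlongrightarrow> deriv u 0) (at 0)" by (rule has_field_derivative_iff[THEN iffD1])
  thus ?thesis using assms(2) by simp
qed

lemma diffq_bound:
  assumes "F analytic_on {0}" "e > 0"
  shows "\<exists>r>0. \<forall>x y. x \<in> ball 0 r \<longrightarrow> y \<in> ball 0 r \<longrightarrow>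
           norm (F x - F y - deriv F 0 * (x - y)) \<le> e * norm (x - y)"
proof -
  obtain S where S: "open S" "0 \<in> S" "F holomorphic_on S" using assms(1) analytic_at by blast
  have "deriv F analytic_on {0}" using assms(1) by (rule analytic_deriv)
  hence "isCont (deriv F) 0" by (rule analytic_at_imp_isCont)
  hence "\<forall>e>0. \<exists>d>0. \<forall>x'. dist x' 0 < d \<longrightarrow> dist (deriv F x') (deriv F 0) < e"
    by (simp only: continuous_at_eps_delta)
  then obtain r1 where r1: "r1 > 0" "\<And>w. dist w 0 < r1 \<Longrightarrow> dist (deriv F w) (deriv F 0) < e"
    using assms(2) by meson
  obtain r2 where r2: "r2 > 0" "ball 0 r2 \<subseteq> S" using openE[OF S(1) S(2)] by metis
  define r where "r = min r1 r2"
  have rpos: "r > 0" using r1(1) r2(1) unfolding r_def by simp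
  have "norm (F x - F y - deriv F 0 * (x - y)) \<le> e * norm (x - y)"
    if xy: "x \<in> ball 0 r" "y \<in> ball 0 r" for x y
  proof -
    have "norm ((\<lambda>w. F w - deriv F 0 * w) x - (\<lambda>w. F w - deriv F 0 * w) y) \<le> e * norm (x - y)"
    proof (rule field_differentiable_bound[where S="ball 0 r" and f'="\<lambda>w. deriv F w - deriv F 0"])
      show "convex (ball (0::complex) r)" by (rule convex_ball)
      fix z :: complex assume z: "z \<in> ball 0 r"
      have "ball 0 r \<subseteq> ball 0 r2" unfolding r_def by (rule subset_ball) simp
      hence "z \<in> S" using r2(2) z by blast
      hence d: "(F has_field_derivative deriv F z) (at z within ball 0 r)"
        using S(1,3) holomorphic_derivI by blast
      have "((\<lambda>w. deriv F 0 * w) has_field_derivative deriv F 0) (at z within ball 0 r)"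
        using DERIV_cmult_Id by blast
      from DERIV_diff[OF d this]
      show "((\<lambda>w. F w - deriv F 0 * w) has_field_derivative deriv F z - deriv F 0) (at z within ball 0 r)" .
      have "dist z 0 < r1" using z unfolding r_def by (simp add: dist_commute)
      hence "dist (deriv F z) (deriv F 0) < e" by (rule r1(2))
      thus "norm (deriv F z - deriv F 0) \<le> e" by (simp add: dist_norm)
    next
      show "x \<in> ball 0 r" "y \<in> ball 0 r" by (fact xy)+
    qed
    moreover have "(\<lambda>w. F w - deriv F 0 * w) x - (\<lambda>w. F w - deriv F 0 * w) y
        = F x - F y - deriv F 0 * (x - y)" by (simp add: algebra_simps)
    ultimately show ?thesis by simp
  qed
  thus ?thesis using rpos by blast
qed

lemma diffq_lim:
  fixes F p q :: "complex \<Rightarrow> complex"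
  assumes F: "F analytic_on {0}" and p: "(p \<longlongrightarrow> 0) (at 0)" and q: "(q \<longlongrightarrow> 0) (at 0)"
    and pq: "((\<lambda>z. (p z - q z) / z ^ s) \<longlongrightarrow> d) (at 0)"
  shows "((\<lambda>z. (F (p z) - F (q z)) / z ^ s) \<longlongrightarrow> deriv F 0 * d) (at 0)"
proof -
  let ?c = "deriv F 0"
  have R: "((\<lambda>z. (F (p z) - F (q z)) / z ^ s - ?c * ((p z - q z) / z ^ s)) \<longlongrightarrow> 0) (at 0)"
    unfolding tendsto_iff
  proof (intro allI impI)
    fix e :: real assume e: "e > 0"
    define \<epsilon> where "\<epsilon> = e / (2 * (norm d + 1))"
    have \<epsilon>: "\<epsilon> > 0" unfolding \<epsilon>_def using e norm_ge_zero[of d] by (intro divide_pos_pos mult_pos_pos) linarith+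
    obtain r where r: "r > 0" "\<And>x y. x \<in> ball 0 r \<Longrightarrow> y \<in> ball 0 r \<Longrightarrow>
           norm (F x - F y - ?c * (x - y)) \<le> \<epsilon> * norm (x - y)"
      using diffq_bound[OF F \<epsilon>] by blast
    have ev1: "\<forall>\<^sub>F z in at 0. dist (p z) 0 < r" using p r(1) unfolding tendsto_iff by blast
    have ev2: "\<forall>\<^sub>F z in at 0. dist (q z) 0 < r" using q r(1) unfolding tendsto_iff by blast
    have ev3: "\<forall>\<^sub>F z in at 0. dist ((p z - q z) / z ^ s) d < 1" using pq unfolding tendsto_iff by simp
    show "\<forall>\<^sub>F z in at 0. dist ((F (p z) - F (q z)) / z ^ s - ?c * ((p z - q z) / z ^ s)) 0 < e"
      using ev1 ev2 ev3
    proof eventually_elim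
      case (elim z)
      have pb: "p z \<in> ball 0 r" "q z \<in> ball 0 r" using elim(1,2) by (simp_all add: dist_commute)
      have nb: "norm ((p z - q z) / z ^ s) \<le> norm d + 1"
        using elim(3) norm_triangle_sub[of "(p z - q z) / z ^ s" d] by (simp add: dist_norm)
      have eq: "(F (p z) - F (q z)) / z ^ s - ?c * ((p z - q z) / z ^ s)
               = (F (p z) - F (q z) - ?c * (p z - q z)) / z ^ s"
        by (simp add: diff_divide_distrib right_diff_distrib)
      have "norm ((F (p z) - F (q z) - ?c * (p z - q z)) / z ^ s)
            = norm (F (p z) - F (q z) - ?c * (p z - q z)) / norm (z ^ s)"
        by (simp add: norm_divide)
      also have "\<dots> \<le> \<epsilon> * norm (p z - q z) / norm (z ^ s)"
        using r(2)[OF pb] by (simp add: divide_right_mono)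
      also have "\<dots> = \<epsilon> * norm ((p z - q z) / z ^ s)" by (simp add: norm_divide)
      also have "\<dots> \<le> \<epsilon> * (norm d + 1)" using nb \<epsilon> by (simp add: mult_left_mono)
      also have "\<dots> = e / 2" proof -
        have nd: "norm d + 1 \<noteq> 0" using norm_ge_zero[of d] by linarith
        show ?thesis unfolding \<epsilon>_def using nd by (simp add: field_simps)
      qed
      also have "\<dots> < e" using e by simp
      finally show ?case using eq by (simp add: dist_norm)
    qed
  qed
  have "((\<lambda>z. ((F (p z) - F (q z)) / z ^ s - ?c * ((p z - q z) / z ^ s)) + ?c * ((p z - q z) / z ^ s))
          \<longlongrightarrow> 0 + ?c * d) (at 0)"
    by (intro tendsto_add R tendsto_mult tendsto_const pq)
  thus ?thesis by simp
qed

lemma rcomp_lim: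
  fixes D r :: "complex \<Rightarrow> complex"
  assumes D: "((\<lambda>z. D z / z ^ s) \<longlongrightarrow> d) (at 0)"
    and r: "r analytic_on {0}" "r 0 = 0" "deriv r 0 \<noteq> 0"
  shows "((\<lambda>z. D (r z) / z ^ s) \<longlongrightarrow> d * deriv r 0 ^ s) (at 0)"
proof -
  have Q: "((\<lambda>z. r z / z) \<longlongrightarrow> deriv r 0) (at 0)" by (rule quot_lim[OF r(1,2)])
  have ne: "\<forall>\<^sub>F z in at 0. r z / z \<noteq> 0" by (rule tendsto_imp_eventually_ne[OF Q r(3)])
  have "\<forall>\<^sub>F z in at 0. r z \<noteq> 0" using ne by eventually_elim auto
  hence fl: "filterlim r (at 0) (at 0)" by (rule filterlim_atI[OF tendsto0_at[OF r(1,2)]])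
  have C: "((\<lambda>z. D (r z) / (r z) ^ s) \<longlongrightarrow> d) (at 0)" using filterlim_compose[OF D fl] by simp
  have "((\<lambda>z. D (r z) / (r z) ^ s * (r z / z) ^ s) \<longlongrightarrow> d * deriv r 0 ^ s) (at 0)"
    by (intro tendsto_mult C tendsto_power Q)
  moreover have "\<forall>\<^sub>F z in at 0. D (r z) / (r z) ^ s * (r z / z) ^ s = D (r z) / z ^ s"
    using ne
  proof eventually_elim
    case (elim z)
    hence "r z \<noteq> 0" "z \<noteq> 0" by auto
    thus ?case by (simp add: power_divide)
  qed
  ultimately show ?thesis by (rule Lim_transform_eventually)
qed

lemma factor0:
  fixes u :: "complex \<Rightarrow> complex"
  assumes u: "u analytic_on {0}" "u 0 = 0" and ne: "\<not> eventually (\<lambda>z. u z = 0) (nhds 0)"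
  obtains s \<delta> where "s > 0" "\<delta> analytic_on {0}" "\<delta> 0 \<noteq> 0"
    "eventually (\<lambda>z. u z = z ^ s * \<delta> z) (nhds 0)"
proof -
  obtain S where S: "open S" "0 \<in> S" "u holomorphic_on S" using u(1) analytic_at by blast
  obtain r0 where r0: "r0 > 0" "ball 0 r0 \<subseteq> S" using openE[OF S(1) S(2)] by metis
  have hb: "u holomorphic_on ball 0 r0" using S(3) r0(2) by (rule holomorphic_on_subset)
  have z0: "(0::complex) \<in> ball 0 r0" using r0(1) by simp
  have nc: "\<not> u constant_on ball 0 r0"
  proof
    assume "u constant_on ball 0 r0"
    then obtain c where c: "\<And>x. x \<in> ball 0 r0 \<Longrightarrow> u x = c" unfolding constant_on_def by blast
    have "\<And>x. x \<in> ball 0 r0 \<Longrightarrow> u x = 0" using c z0 u(2) by metis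
    hence "eventually (\<lambda>z. u z = 0) (nhds 0)"
      unfolding eventually_nhds using z0 open_ball by blast
    thus False using ne by contradiction
  qed
  show ?thesis
  proof (rule holomorphic_factor_zero_nonconstant[OF hb open_ball connected_ball z0 u(2) nc])
    fix g r n
    assume gr: "0 < n" "0 < r" "ball 0 r \<subseteq> ball 0 r0" "g holomorphic_on ball 0 r"
      "\<And>w. w \<in> ball 0 r \<Longrightarrow> u w = (w - 0) ^ n * g w" "\<And>w. w \<in> ball 0 r \<Longrightarrow> g w \<noteq> 0"
    have z1: "(0::complex) \<in> ball 0 r" using gr(2) by simp
    have "g analytic_on {0}" using holomorphic_on_imp_analytic_at[OF gr(4) open_ball z1] .
    moreover have "g 0 \<noteq> 0" using gr(6) z1 by blast
    moreover have "eventually (\<lambda>z. u z = z ^ n * g z) (nhds 0)"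
      unfolding eventually_nhds
      by (intro exI[of _ "ball 0 r"] conjI open_ball z1) (use gr(5) in simp)
    ultimately show ?thesis using that gr(1) by blast
  qed
qed

lemma iter_facts:
  fixes \<phi> :: "complex \<Rightarrow> complex"
  assumes "\<phi> analytic_on {0}" "\<phi> 0 = 0"
  shows "(\<phi> ^^ j) analytic_on {0} \<and> (\<phi> ^^ j) 0 = 0 \<and> deriv (\<phi> ^^ j) 0 = deriv \<phi> 0 ^ j"
proof (induction j)
  case 0
  have "deriv (\<lambda>x. x) 0 = (1::complex)" by simp
  thus ?case by (simp add: id_def analytic_on_ident)
next
  case (Suc j)
  have a: "(\<phi> \<circ> \<phi> ^^ j) analytic_on {0}"
    using Suc.IH assms by (intro analytic_on_compose_gen[where T="{0}"]) auto
  have "deriv (\<phi> \<circ> \<phi> ^^ j) 0 = deriv \<phi> ((\<phi> ^^ j) 0) * deriv (\<phi> ^^ j) 0"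
    using Suc.IH assms by (intro deriv_chain analytic_on_imp_differentiable_at[where S="{0}"]) auto
  thus ?case using a Suc.IH assms by (simp add: o_def)
qed

lemma ev_at: "eventually P (nhds (0::complex)) \<Longrightarrow> eventually P (at 0)"
  unfolding eventually_at_filter by (erule eventually_mono) simp

lemma fac_lim:
  fixes u \<delta> :: "complex \<Rightarrow> complex"
  assumes "eventually (\<lambda>z. u z = z ^ s * \<delta> z) (nhds 0)" "\<delta> analytic_on {0}"
  shows "((\<lambda>z. u z / z ^ s) \<longlongrightarrow> \<delta> 0) (at 0)"
proof -
  have "(\<delta> \<longlongrightarrow> \<delta> 0) (at 0)" using analytic_at_imp_isCont[OF assms(2)] by (simp add: isCont_def)
  moreover have "\<forall>\<^sub>F z in at 0. \<delta> z = u z / z ^ s"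
    using assms(1) unfolding eventually_at_filter by (rule eventually_mono) auto
  ultimately show ?thesis by (rule Lim_transform_eventually)
qed

lemma sum_pow_aux:
  fixes x y z :: complex
  assumes "z \<noteq> 0"
  shows "(\<Sum>i<m. y ^ (m - Suc i) * x ^ i) = z ^ (m - 1) * (\<Sum>i<m. (y / z) ^ (m - Suc i) * (x / z) ^ i)"
  unfolding sum_distrib_left
proof (rule sum.cong[OF refl])
  fix i assume "i \<in> {..<m}"
  hence e: "m - 1 = (m - Suc i) + i" by auto
  show "y ^ (m - Suc i) * x ^ i = z ^ (m - 1) * ((y / z) ^ (m - Suc i) * (x / z) ^ i)"
    unfolding e power_add using assms by (simp add: power_divide field_simps)
qed

lemma alg1:
  fixes x z P S Q W :: complex
  assumes "z \<noteq> 0" "m > 0" "s > 0"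
  shows "(x / z) ^ s * z * (P / z ^ m) + (W / z ^ m) * S * Q
       = (x ^ s * P + W * (z ^ (s - 1) * S) * Q) / z ^ (s + m - 1)"
proof -
  obtain s' m' where sm: "s = Suc s'" "m = Suc m'" using assms(2,3) by (cases s; cases m) auto
  have e: "s + m - 1 = Suc (s' + m')" using sm by simp
  show ?thesis unfolding e unfolding sm using assms(1)
    by (simp add: power_add power_divide field_simps)
qed

lemma E1:
  fixes D \<delta> G :: "complex \<Rightarrow> complex"
  assumes Df: "eventually (\<lambda>z. D z = z ^ s * \<delta> z) (nhds 0)" and \<delta>: "\<delta> analytic_on {0}"
    and G: "G analytic_on {0}" "G 0 = 0" "deriv G 0 = 1"
    and A: "((\<lambda>z. (G z - z) / z ^ m) \<longlongrightarrow> a) (at 0)" and m: "m > 0" and s: "s > 0"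
  shows "((\<lambda>z. (D (G z) - D z) / z ^ (s + m - 1)) \<longlongrightarrow> of_nat s * a * \<delta> 0) (at 0)"
proof -
  have Gq: "((\<lambda>z. G z / z) \<longlongrightarrow> 1) (at 0)" using quot_lim[OF G(1,2)] G(3) by simp
  have T1: "((\<lambda>z. (\<delta> (G z) - \<delta> z) / z ^ m) \<longlongrightarrow> deriv \<delta> 0 * a) (at 0)"
    using diffq_lim[OF \<delta> tendsto0_at[OF G(1,2)] tendsto_ident_at A] by simp
  have S0: "((\<lambda>z. \<Sum>i<s. (G z / z) ^ i) \<longlongrightarrow> (\<Sum>i<s. (1::complex) ^ i)) (at 0)"
    by (intro tendsto_sum tendsto_power Gq)
  have S': "((\<lambda>z. \<Sum>i<s. (z / z) ^ (s - Suc i) * (G z / z) ^ i) \<longlongrightarrow> of_nat s) (at 0)"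
  proof -
    have "((\<lambda>z. \<Sum>i<s. (G z / z) ^ i) \<longlongrightarrow> of_nat s) (at 0)" using S0 by simp
    moreover have "\<forall>\<^sub>F z in at 0. (\<Sum>i<s. (G z / z) ^ i) = (\<Sum>i<s. (z / z) ^ (s - Suc i) * (G z / z) ^ i)"
      unfolding eventually_at_filter by (intro always_eventually) auto
    ultimately show ?thesis by (rule Lim_transform_eventually)
  qed
  have dl: "(\<delta> \<longlongrightarrow> \<delta> 0) (at 0)" using analytic_at_imp_isCont[OF \<delta>] by (simp add: isCont_def)
  have L: "((\<lambda>z. (G z / z) ^ s * z * ((\<delta> (G z) - \<delta> z) / z ^ m)
              + ((G z - z) / z ^ m) * (\<Sum>i<s. (z / z) ^ (s - Suc i) * (G z / z) ^ i) * \<delta> z)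
           \<longlongrightarrow> 1 ^ s * 0 * (deriv \<delta> 0 * a) + a * of_nat s * \<delta> 0) (at 0)"
    by (intro tendsto_add tendsto_mult tendsto_power Gq tendsto_ident_at T1 A S' dl)
  have ev1: "\<forall>\<^sub>F z in at 0. D (G z) = (G z) ^ s * \<delta> (G z)" by (rule ev_at[OF ev_comp[OF Df G(1,2)]])
  have ev2: "\<forall>\<^sub>F z in at 0. D z = z ^ s * \<delta> z" by (rule ev_at[OF Df])
  have ev3: "\<forall>\<^sub>F z in at 0. z \<noteq> 0" by (simp add: eventually_at_filter)
  have "\<forall>\<^sub>F z in at 0. (G z / z) ^ s * z * ((\<delta> (G z) - \<delta> z) / z ^ m)
              + ((G z - z) / z ^ m) * (\<Sum>i<s. (z / z) ^ (s - Suc i) * (G z / z) ^ i) * \<delta> z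
          = (D (G z) - D z) / z ^ (s + m - 1)"
    using ev1 ev2 ev3
  proof eventually_elim
    case (elim z)
    define x where "x = G z"
    obtain m' where m': "m = Suc m'" using m by (cases m) auto
    have pd: "x ^ s - z ^ s = (x - z) * (z ^ (s - 1) * (\<Sum>i<s. (z / z) ^ (s - Suc i) * (x / z) ^ i))"
      using power_diff_sumr2[of x s z] sum_pow_aux[OF elim(3), where m=s and y=z and x=x] by simp
    have "D x - D z = x ^ s * (\<delta> x - \<delta> z) + (x ^ s - z ^ s) * \<delta> z"
      using elim unfolding x_def by (simp add: algebra_simps)
    also have "\<dots> = x ^ s * (\<delta> x - \<delta> z) + (x - z) * (z ^ (s - 1) * (\<Sum>i<s. (z / z) ^ (s - Suc i) * (x / z) ^ i)) * \<delta> z"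
      unfolding pd ..
    finally have e: "D x - D z = \<dots>" .
    show ?case unfolding x_def[symmetric] e by (rule alg1[OF elim(3) m s])
  qed
  from L this have TT: "((\<lambda>z. (D (G z) - D z) / z ^ (s + m - 1)) \<longlongrightarrow> 1 ^ s * 0 * (deriv \<delta> 0 * a) + a * of_nat s * \<delta> 0) (at 0)"
    by (rule Lim_transform_eventually)
  have EE: "1 ^ s * 0 * (deriv \<delta> 0 * a) + a * of_nat s * \<delta> 0 = of_nat s * a * \<delta> 0" by (simp add: mult_ac)
  show ?thesis using TT unfolding EE .
qed

lemma E2:
  fixes A \<alpha> \<phi> \<psi> :: "complex \<Rightarrow> complex"
  assumes Af: "eventually (\<lambda>z. A z = z ^ m * \<alpha> z) (nhds 0)" and \<alpha>: "\<alpha> analytic_on {0}"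
    and \<phi>: "\<phi> analytic_on {0}" "\<phi> 0 = 0" "deriv \<phi> 0 = l"
    and \<psi>: "\<psi> analytic_on {0}" "\<psi> 0 = 0" "deriv \<psi> 0 = l"
    and Dl: "((\<lambda>z. (\<phi> z - \<psi> z) / z ^ s) \<longlongrightarrow> d) (at 0)" and m: "m > 0" and s: "s > 0"
  shows "((\<lambda>z. (A (\<phi> z) - A (\<psi> z)) / z ^ (s + m - 1)) \<longlongrightarrow> d * (of_nat m * l ^ (m - 1)) * \<alpha> 0) (at 0)"
proof -
  have \<phi>q: "((\<lambda>z. \<phi> z / z) \<longlongrightarrow> l) (at 0)" using quot_lim[OF \<phi>(1,2)] \<phi>(3) by simp
  have \<psi>q: "((\<lambda>z. \<psi> z / z) \<longlongrightarrow> l) (at 0)" using quot_lim[OF \<psi>(1,2)] \<psi>(3) by simp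
  have T1: "((\<lambda>z. (\<alpha> (\<phi> z) - \<alpha> (\<psi> z)) / z ^ s) \<longlongrightarrow> deriv \<alpha> 0 * d) (at 0)"
    by (rule diffq_lim[OF \<alpha> tendsto0_at[OF \<phi>(1,2)] tendsto0_at[OF \<psi>(1,2)] Dl])
  have S: "((\<lambda>z. \<Sum>i<m. (\<psi> z / z) ^ (m - Suc i) * (\<phi> z / z) ^ i) \<longlongrightarrow> (\<Sum>i<m. l ^ (m - Suc i) * l ^ i)) (at 0)"
    by (intro tendsto_sum tendsto_mult tendsto_power \<phi>q \<psi>q)
  have "(\<Sum>i<m. l ^ (m - Suc i) * l ^ i) = (\<Sum>i<m. l ^ (m - 1))"
  proof (rule sum.cong[OF refl])
    fix i assume "i \<in> {..<m}"
    hence e: "m - 1 = (m - Suc i) + i" by auto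
    show "l ^ (m - Suc i) * l ^ i = l ^ (m - 1)" unfolding e power_add ..
  qed
  hence Ssimp: "(\<Sum>i<m. l ^ (m - Suc i) * l ^ i) = of_nat m * l ^ (m - 1)" by simp
  have al: "((\<lambda>z. \<alpha> (\<psi> z)) \<longlongrightarrow> \<alpha> 0) (at 0)"
    by (rule isCont_tendsto_compose[OF analytic_at_imp_isCont[OF \<alpha>] tendsto0_at[OF \<psi>(1,2)]])
  have L: "((\<lambda>z. (\<phi> z / z) ^ m * z * ((\<alpha> (\<phi> z) - \<alpha> (\<psi> z)) / z ^ s)
             + ((\<phi> z - \<psi> z) / z ^ s) * (\<Sum>i<m. (\<psi> z / z) ^ (m - Suc i) * (\<phi> z / z) ^ i) * \<alpha> (\<psi> z))
           \<longlongrightarrow> l ^ m * 0 * (deriv \<alpha> 0 * d) + d * (of_nat m * l ^ (m - 1)) * \<alpha> 0) (at 0)"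
    using S unfolding Ssimp by (intro tendsto_add tendsto_mult tendsto_power \<phi>q tendsto_ident_at T1 Dl al)
  have ev1: "\<forall>\<^sub>F z in at 0. A (\<phi> z) = (\<phi> z) ^ m * \<alpha> (\<phi> z)" by (rule ev_at[OF ev_comp[OF Af \<phi>(1,2)]])
  have ev2: "\<forall>\<^sub>F z in at 0. A (\<psi> z) = (\<psi> z) ^ m * \<alpha> (\<psi> z)" by (rule ev_at[OF ev_comp[OF Af \<psi>(1,2)]])
  have ev3: "\<forall>\<^sub>F z in at 0. z \<noteq> 0" by (simp add: eventually_at_filter)
  have "\<forall>\<^sub>F z in at 0. (\<phi> z / z) ^ m * z * ((\<alpha> (\<phi> z) - \<alpha> (\<psi> z)) / z ^ s)
             + ((\<phi> z - \<psi> z) / z ^ s) * (\<Sum>i<m. (\<psi> z / z) ^ (m - Suc i) * (\<phi> z / z) ^ i) * \<alpha> (\<psi> z)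
          = (A (\<phi> z) - A (\<psi> z)) / z ^ (s + m - 1)"
    using ev1 ev2 ev3
  proof eventually_elim
    case (elim z)
    define x where "x = \<phi> z"
    define y where "y = \<psi> z"
    have pd: "x ^ m - y ^ m = (x - y) * (z ^ (m - 1) * (\<Sum>i<m. (y / z) ^ (m - Suc i) * (x / z) ^ i))"
      using power_diff_sumr2[of x m y] sum_pow_aux[OF elim(3), where m=m and y=y and x=x] by simp
    have "A x - A y = x ^ m * (\<alpha> x - \<alpha> y) + (x ^ m - y ^ m) * \<alpha> y"
      using elim unfolding x_def y_def by (simp add: algebra_simps)
    also have "\<dots> = x ^ m * (\<alpha> x - \<alpha> y) + (x - y) * (z ^ (m - 1) * (\<Sum>i<m. (y / z) ^ (m - Suc i) * (x / z) ^ i)) * \<alpha> y"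
      unfolding pd ..
    finally have e: "A x - A y = \<dots>" .
    have e2: "s + m - 1 = m + s - 1" by simp
    show ?case unfolding x_def[symmetric] y_def[symmetric] e e2 by (rule alg1[OF elim(3) s m])
  qed
  with L show ?thesis by (simp add: Lim_transform_eventually)
qed

lemma TEL:
  fixes \<phi> \<psi> :: "complex \<Rightarrow> complex"
  assumes \<phi>: "\<phi> analytic_on {0}" "\<phi> 0 = 0" "deriv \<phi> 0 = l"
    and \<psi>: "\<psi> analytic_on {0}" "\<psi> 0 = 0" "deriv \<psi> 0 = l" and l: "l \<noteq> 0"
    and Dl: "((\<lambda>z. (\<phi> z - \<psi> z) / z ^ s) \<longlongrightarrow> d) (at 0)"
  shows "((\<lambda>z. ((\<phi> ^^ n) z - (\<psi> ^^ n) z) / z ^ s) \<longlongrightarrow> (\<Sum>j<n. l ^ j * (d * (l ^ (n - Suc j)) ^ s))) (at 0)"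
proof -
  have T: "((\<lambda>z. ((\<psi> ^^ j) (\<phi> ((\<phi> ^^ (n - Suc j)) z)) - (\<psi> ^^ j) (\<psi> ((\<phi> ^^ (n - Suc j)) z))) / z ^ s)
           \<longlongrightarrow> l ^ j * (d * (l ^ (n - Suc j)) ^ s)) (at 0)" for j
  proof -
    let ?r = "\<phi> ^^ (n - Suc j)"
    have r: "?r analytic_on {0}" "?r 0 = 0" "deriv ?r 0 = l ^ (n - Suc j)"
      using iter_facts[OF \<phi>(1,2)] \<phi>(3) by auto
    have rne: "deriv ?r 0 \<noteq> 0" using r(3) l by simp
    have rl: "((\<lambda>z. (\<phi> (?r z) - \<psi> (?r z)) / z ^ s) \<longlongrightarrow> d * (l ^ (n - Suc j)) ^ s) (at 0)"
      using rcomp_lim[OF Dl r(1,2) rne] r(3) by simp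
    have F: "(\<psi> ^^ j) analytic_on {0}" "deriv (\<psi> ^^ j) 0 = l ^ j"
      using iter_facts[OF \<psi>(1,2)] \<psi>(3) by auto
    have p: "((\<lambda>z. \<phi> (?r z)) \<longlongrightarrow> 0) (at 0)"
      using isCont_tendsto_compose[OF analytic_at_imp_isCont[OF \<phi>(1)] tendsto0_at[OF r(1,2)]] \<phi>(2) by simp
    have q: "((\<lambda>z. \<psi> (?r z)) \<longlongrightarrow> 0) (at 0)"
      using isCont_tendsto_compose[OF analytic_at_imp_isCont[OF \<psi>(1)] tendsto0_at[OF r(1,2)]] \<psi>(2) by simp
    show ?thesis using diffq_lim[OF F(1) p q rl] F(2) by simp
  qed
  have S: "((\<lambda>z. \<Sum>j<n. ((\<psi> ^^ j) (\<phi> ((\<phi> ^^ (n - Suc j)) z)) - (\<psi> ^^ j) (\<psi> ((\<phi> ^^ (n - Suc j)) z))) / z ^ s)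
           \<longlongrightarrow> (\<Sum>j<n. l ^ j * (d * (l ^ (n - Suc j)) ^ s))) (at 0)"
    by (intro tendsto_sum T)
  have eq: "(\<Sum>j<n. ((\<psi> ^^ j) (\<phi> ((\<phi> ^^ (n - Suc j)) z)) - (\<psi> ^^ j) (\<psi> ((\<phi> ^^ (n - Suc j)) z))) / z ^ s)
            = ((\<phi> ^^ n) z - (\<psi> ^^ n) z) / z ^ s" for z
  proof -
    define f where "f j = (\<psi> ^^ j) ((\<phi> ^^ (n - j)) z)" for j
    have "(\<Sum>j<n. (\<psi> ^^ j) (\<phi> ((\<phi> ^^ (n - Suc j)) z)) - (\<psi> ^^ j) (\<psi> ((\<phi> ^^ (n - Suc j)) z)))
          = (\<Sum>j<n. f j - f (Suc j))"
    proof (rule sum.cong[OF refl])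
      fix j assume "j \<in> {..<n}"
      hence e: "n - j = Suc (n - Suc j)" by auto
      have e2: "(\<psi> ^^ Suc j) w = (\<psi> ^^ j) (\<psi> w)" for w by (simp only: funpow_Suc_right o_apply)
      show "(\<psi> ^^ j) (\<phi> ((\<phi> ^^ (n - Suc j)) z)) - (\<psi> ^^ j) (\<psi> ((\<phi> ^^ (n - Suc j)) z)) = f j - f (Suc j)"
        unfolding f_def e e2 by simp
    qed
    also have "\<dots> = f 0 - f n" by (rule sum_lessThan_telescope')
    also have "\<dots> = (\<phi> ^^ n) z - (\<psi> ^^ n) z" unfolding f_def by simp
    finally show ?thesis by (simp add: sum_divide_distrib[symmetric])
  qed
  show ?thesis using S unfolding eq .
qed

lemma core:
  fixes \<phi> \<psi> :: "complex \<Rightarrow> complex" and l :: complex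
  assumes \<phi>: "\<phi> analytic_on {0}" "\<phi> 0 = 0" "deriv \<phi> 0 = l"
    and \<psi>: "\<psi> analytic_on {0}" "\<psi> 0 = 0" "deriv \<psi> 0 = l"
    and ln: "l ^ n = 1" and n: "n > 0"
    and E: "eventually (\<lambda>z. (\<phi> ^^ n) z = (\<psi> ^^ n) z) (nhds 0)"
    and NT: "\<not> eventually (\<lambda>z. (\<psi> ^^ n) z = z) (nhds 0)"
  shows "eventually (\<lambda>z. \<phi> z = \<psi> z) (nhds 0)"
proof (rule ccontr)
  assume N: "\<not> ?thesis"
  have nl: "norm l = 1" using power_eq_1_iff[OF ln] n by auto
  hence l0: "l \<noteq> 0" by auto
  define G where "G = \<psi> ^^ n"
  have G: "G analytic_on {0}" "G 0 = 0" "deriv G 0 = 1"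
    using iter_facts[OF \<psi>(1,2), of n] \<psi>(3) ln unfolding G_def by auto
  define D where "D = (\<lambda>z. \<phi> z - \<psi> z)"
  have Da: "D analytic_on {0}" "D 0 = 0" unfolding D_def using \<phi> \<psi> by (auto intro: analytic_on_diff)
  have Dn: "\<not> eventually (\<lambda>z. D z = 0) (nhds 0)" using N unfolding D_def by simp
  obtain s \<delta> where s\<delta>: "s > 0" "\<delta> analytic_on {0}" "\<delta> 0 \<noteq> 0" "eventually (\<lambda>z. D z = z ^ s * \<delta> z) (nhds 0)"
    using factor0[OF Da Dn] by blast
  define A where "A = (\<lambda>z. G z - z)"
  have Aa: "A analytic_on {0}" "A 0 = 0" using G unfolding A_def by (auto intro: analytic_on_diff analytic_on_ident)
  have An: "\<not> eventually (\<lambda>z. A z = 0) (nhds 0)" using NT unfolding A_def G_def by simp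
  obtain m \<alpha> where m\<alpha>: "m > 0" "\<alpha> analytic_on {0}" "\<alpha> 0 \<noteq> 0" "eventually (\<lambda>z. A z = z ^ m * \<alpha> z) (nhds 0)"
    using factor0[OF Aa An] by blast
  have DL: "((\<lambda>z. D z / z ^ s) \<longlongrightarrow> \<delta> 0) (at 0)" by (rule fac_lim[OF s\<delta>(4,2)])
  have AL: "((\<lambda>z. (G z - z) / z ^ m) \<longlongrightarrow> \<alpha> 0) (at 0)" using fac_lim[OF m\<alpha>(4,2)] unfolding A_def .
  have L1: "((\<lambda>z. (D (G z) - D z) / z ^ (s + m - 1)) \<longlongrightarrow> of_nat s * \<alpha> 0 * \<delta> 0) (at 0)"
    by (rule E1[OF s\<delta>(4,2) G AL m\<alpha>(1) s\<delta>(1)])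
  have DL': "((\<lambda>z. (\<phi> z - \<psi> z) / z ^ s) \<longlongrightarrow> \<delta> 0) (at 0)" using DL unfolding D_def .
  have L2: "((\<lambda>z. (A (\<phi> z) - A (\<psi> z)) / z ^ (s + m - 1)) \<longlongrightarrow> \<delta> 0 * (of_nat m * l ^ (m - 1)) * \<alpha> 0) (at 0)"
    by (rule E2[OF m\<alpha>(4,2) \<phi> \<psi> DL' m\<alpha>(1) s\<delta>(1)])
  have C1: "eventually (\<lambda>z. \<phi> (G z) = G (\<phi> z)) (nhds 0)"
  proof -
    have e1: "eventually (\<lambda>z. (\<phi> ^^ n) (\<phi> z) = (\<psi> ^^ n) (\<phi> z)) (nhds 0)" by (rule ev_comp[OF E \<phi>(1,2)])
    show ?thesis using E e1
    proof eventually_elim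
      case (elim z)
      have "\<phi> ((\<psi> ^^ n) z) = \<phi> ((\<phi> ^^ n) z)" using elim(1) by simp
      also have "\<dots> = (\<phi> ^^ n) (\<phi> z)" by (rule funpow_swap1)
      also have "\<dots> = (\<psi> ^^ n) (\<phi> z)" using elim(2) .
      finally show ?case by (simp add: G_def)
    qed
  qed
  have C2: "\<psi> (G z) = G (\<psi> z)" for z unfolding G_def by (rule funpow_swap1)
  have EQ: "\<forall>\<^sub>F z in at 0. (A (\<phi> z) - A (\<psi> z)) / z ^ (s + m - 1) = (D (G z) - D z) / z ^ (s + m - 1)"
    using ev_at[OF C1] by eventually_elim (simp add: D_def A_def C2)
  have L2': "((\<lambda>z. (D (G z) - D z) / z ^ (s + m - 1)) \<longlongrightarrow> \<delta> 0 * (of_nat m * l ^ (m - 1)) * \<alpha> 0) (at 0)"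
    by (rule Lim_transform_eventually[OF L2 EQ])
  have eq1: "of_nat s * \<alpha> 0 * \<delta> 0 = \<delta> 0 * (of_nat m * l ^ (m - 1)) * \<alpha> 0"
    by (rule tendsto_unique[OF at_neq_bot L1 L2'])
  hence "(of_nat s - of_nat m * l ^ (m - 1)) * (\<alpha> 0 * \<delta> 0) = 0" by (simp add: algebra_simps)
  hence eq2: "of_nat s = of_nat m * l ^ (m - 1)" using s\<delta>(3) m\<alpha>(3) by simp
  have "norm (of_nat s :: complex) = norm (of_nat m * l ^ (m - 1))" using eq2 by simp
  hence "real s = real m" using nl by (simp add: norm_mult norm_power)
  hence sm: "s = m" by simp
  hence lm: "l ^ (m - 1) = 1" using eq2 m\<alpha>(1) by simp
  have ls: "l ^ s = l"
  proof -
    have "s = Suc (m - 1)" using sm m\<alpha>(1) by simp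
    hence "l ^ s = l * l ^ (m - 1)" by simp
    thus ?thesis using lm by simp
  qed
  have TL: "((\<lambda>z. ((\<phi> ^^ n) z - (\<psi> ^^ n) z) / z ^ s) \<longlongrightarrow> (\<Sum>j<n. l ^ j * (\<delta> 0 * (l ^ (n - Suc j)) ^ s))) (at 0)"
    by (rule TEL[OF \<phi> \<psi> l0 DL'])
  have "(\<Sum>j<n. l ^ j * (\<delta> 0 * (l ^ (n - Suc j)) ^ s)) = (\<Sum>j<n. \<delta> 0 * l ^ (n - 1))"
  proof (rule sum.cong[OF refl])
    fix j assume "j \<in> {..<n}"
    hence e: "n - 1 = j + (n - Suc j)" by auto
    have "(l ^ (n - Suc j)) ^ s = (l ^ s) ^ (n - Suc j)" by (simp add: power_mult[symmetric] mult.commute)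
    thus "l ^ j * (\<delta> 0 * (l ^ (n - Suc j)) ^ s) = \<delta> 0 * l ^ (n - 1)"
      unfolding e power_add using ls by simp
  qed
  hence sumv: "(\<Sum>j<n. l ^ j * (\<delta> 0 * (l ^ (n - Suc j)) ^ s)) = of_nat n * (\<delta> 0 * l ^ (n - 1))" by simp
  have "\<forall>\<^sub>F z in at 0. 0 = ((\<phi> ^^ n) z - (\<psi> ^^ n) z) / z ^ s"
    using ev_at[OF E] by eventually_elim simp
  hence TL0: "((\<lambda>z. ((\<phi> ^^ n) z - (\<psi> ^^ n) z) / z ^ s) \<longlongrightarrow> 0) (at 0)"
    by (rule Lim_transform_eventually[OF tendsto_const])
  have "of_nat n * (\<delta> 0 * l ^ (n - 1)) = 0"
    using tendsto_unique[OF at_neq_bot TL TL0] sumv by simp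
  thus False using n s\<delta>(3) l0 by simp
qed

lemma inG_an:
  assumes "in_G u"
  shows "u analytic_on {0}" "u 0 = 0" "deriv u 0 \<noteq> 0"
proof -
  obtain r where r: "r > 0" "u holomorphic_on ball 0 r" using assms unfolding in_G_def by blast
  have "(0::complex) \<in> ball 0 r" using r(1) by simp
  thus "u analytic_on {0}" using holomorphic_on_imp_analytic_at[OF r(2) open_ball] by blast
  show "u 0 = 0" "deriv u 0 \<noteq> 0" using assms unfolding in_G_def by auto
qed

theorem corollary2p4:
  fixes n :: nat and f g :: "complex \<Rightarrow> complex" and lam :: complex
  assumes "in_H f" and "in_H g"
    and "deriv f 0 = lam" and "deriv g 0 = lam" and "lam ^ n = 1"
    and "\<not> germ_eq (f ^^ n) id"
  shows "\<forall>h hinv. in_G h \<longrightarrow> germ_inv h hinv \<longrightarrow>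
           germ_eq (hinv \<circ> (f ^^ n) \<circ> h) (g ^^ n) \<longrightarrow>
           germ_eq (hinv \<circ> f \<circ> h) g"
proof (intro allI impI)
  fix h hinv
  assume hG: "in_G h" and hi: "germ_inv h hinv" and conj: "germ_eq (hinv \<circ> (f ^^ n) \<circ> h) (g ^^ n)"
  have fa: "f analytic_on {0}" "f 0 = 0" using assms(1) inG_an unfolding in_H_def by auto
  have ga: "g analytic_on {0}" "g 0 = 0" using assms(2) inG_an unfolding in_H_def by auto
  have ha: "h analytic_on {0}" "h 0 = 0" using hG inG_an by auto
  have ka: "hinv analytic_on {0}" "hinv 0 = 0" using hi inG_an unfolding germ_inv_def by auto
  have KH: "eventually (\<lambda>z. hinv (h z) = z) (nhds 0)" using hi unfolding germ_inv_def germ_eq_def by simp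
  have HK: "eventually (\<lambda>z. h (hinv z) = z) (nhds 0)" using hi unfolding germ_inv_def germ_eq_def by simp
  have n: "n > 0"
  proof (rule ccontr)
    assume "\<not> n > 0"
    hence "n = 0" by simp
    thus False using assms(6) unfolding germ_eq_def by simp
  qed
  define \<phi> where "\<phi> = hinv \<circ> f \<circ> h"
  have fh: "(f \<circ> h) analytic_on {0}" using ha fa by (intro analytic_on_compose_gen[where T="{0}"]) auto
  have \<phi>a: "\<phi> analytic_on {0}" unfolding \<phi>_def o_assoc[symmetric]
    using fh ka fa ha by (intro analytic_on_compose_gen[where T="{0}"]) auto
  have \<phi>0: "\<phi> 0 = 0" unfolding \<phi>_def using fa ha ka by simp
  have dkh0: "deriv (hinv \<circ> h) 0 = deriv hinv (h 0) * deriv h 0"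
    using ha ka by (intro deriv_chain analytic_on_imp_differentiable_at[where S="{0}"]) auto
  have dkh: "deriv (hinv \<circ> h) 0 = deriv hinv 0 * deriv h 0" using dkh0 ha by simp
  have "deriv (hinv \<circ> h) 0 = deriv (\<lambda>z. z) 0"
    by (rule deriv_cong_ev[OF _ refl]) (use KH in simp)
  hence one: "deriv hinv 0 * deriv h 0 = 1" using dkh by simp
  have "deriv \<phi> 0 = deriv hinv ((f \<circ> h) 0) * deriv (f \<circ> h) 0"
    unfolding \<phi>_def o_assoc[symmetric]
    using fh ka fa ha by (intro deriv_chain analytic_on_imp_differentiable_at[where S="{0}"]) auto
  also have "deriv (f \<circ> h) 0 = deriv f (h 0) * deriv h 0"
    using ha fa by (intro deriv_chain analytic_on_imp_differentiable_at[where S="{0}"]) auto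
  finally have "deriv \<phi> 0 = lam * (deriv hinv 0 * deriv h 0)" using ha fa assms(3) by simp
  hence \<phi>d: "deriv \<phi> 0 = lam" using one by simp
  have I: "eventually (\<lambda>z. (\<phi> ^^ j) z = hinv ((f ^^ j) (h z))) (nhds 0)" for j
  proof (induction j)
    case 0
    show ?case using KH by (simp add: eventually_mono)
  next
    case (Suc j)
    have fjh: "((f ^^ j) \<circ> h) analytic_on {0}" "((f ^^ j) \<circ> h) 0 = 0"
      using iter_facts[OF fa, of j] ha by (auto intro: analytic_on_compose_gen[where T="{0}"])
    have e2: "eventually (\<lambda>z. h (hinv (((f ^^ j) \<circ> h) z)) = ((f ^^ j) \<circ> h) z) (nhds 0)"
      by (rule ev_comp[OF HK fjh])
    show ?case using Suc e2
    proof eventually_elim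
      case (elim z)
      have "(\<phi> ^^ Suc j) z = \<phi> ((\<phi> ^^ j) z)" by simp
      also have "\<dots> = \<phi> (hinv ((f ^^ j) (h z)))" using elim(1) by simp
      also have "\<dots> = hinv (f (h (hinv ((f ^^ j) (h z)))))" unfolding \<phi>_def by simp
      also have "\<dots> = hinv (f ((f ^^ j) (h z)))" using elim(2) by simp
      finally show ?case by simp
    qed
  qed
  have E: "eventually (\<lambda>z. (\<phi> ^^ n) z = (g ^^ n) z) (nhds 0)"
    using I[of n] conj unfolding germ_eq_def by eventually_elim simp
  have NT: "\<not> eventually (\<lambda>z. (g ^^ n) z = z) (nhds 0)"
  proof
    assume gn: "eventually (\<lambda>z. (g ^^ n) z = z) (nhds 0)"
    have K: "eventually (\<lambda>z. hinv ((f ^^ n) (h z)) = z) (nhds 0)"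
      using conj gn unfolding germ_eq_def by eventually_elim simp
    have K2: "eventually (\<lambda>z. hinv ((f ^^ n) (h (hinv z))) = hinv z) (nhds 0)"
      by (rule ev_comp[OF K ka])
    have fna: "(f ^^ n) analytic_on {0}" "(f ^^ n) 0 = 0" using iter_facts[OF fa, of n] by auto
    have K3: "eventually (\<lambda>z. h (hinv ((f ^^ n) z)) = (f ^^ n) z) (nhds 0)"
      by (rule ev_comp[OF HK fna])
    have "eventually (\<lambda>z. (f ^^ n) z = id z) (nhds 0)"
      using K2 K3 HK
    proof eventually_elim
      case (elim z)
      have "(f ^^ n) z = h (hinv ((f ^^ n) z))" using elim(2) by simp
      also have "\<dots> = h (hinv ((f ^^ n) (h (hinv z))))" using elim(3) by simp
      also have "\<dots> = h (hinv z)" using elim(1) by simp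
      also have "\<dots> = z" using elim(3) .
      finally show ?case by simp
    qed
    thus False using assms(6) unfolding germ_eq_def by simp
  qed
  have "eventually (\<lambda>z. \<phi> z = g z) (nhds 0)"
    using assms(4,5) ga
    by (intro core[OF \<phi>a \<phi>0 \<phi>d _ _ _ _ n E NT]) auto
  thus "germ_eq (hinv \<circ> f \<circ> h) g" unfolding germ_eq_def \<phi>_def .
qed

end
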